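(* Let $1\le k<n$ and let $T\colon\mathbb{H}_n\to\mathbb{H}_n$ be a bijective $\mathbb{R}$-linear map. Suppose $P_1,P_2$ are rank-$k$ orthogonal projections with $\operatorname{span}_{\mathbb{R}}S^{\mathbb{H}}(P_1)\neq\operatorname{span}_{\mathbb{R}}S^{\mathbb{H}}(P_2)$, and let $\theta_1,\theta_2\in\{-1,1\}$. Then there do not exist a rank-$k$ orthogonal projection $Q$ and $\theta_3\in\{-1,1\}$ such that $T(\theta_1S^{\mathbb{H}}(P_1))\cup T(\theta_2S^{\mathbb{H}}(P_2))\subseteq\theta_3S^{\mathbb{H}}(Q)$.
   Context: $\mathbb{H}_n$ is the real space of $n\times n$ Hermitian matrices. $w_k(A)=\max\{|\operatorname{tr}(AP)|: P=P^*=P^2,\operatorname{tr}P=k\}$. For a rank-$k$ orthogonal projection $P$, $S^{\mathbb{H}}(P)=\{B\in\mathbb{H}_n:\operatorname{tr}(BP)=w_k(B)\}$. *)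

theory Defs
  imports "HOL-Analysis.Analysis"
begin

text \<open>Complex n x n matrices are represented as complex ^'n ^'n, with n = CARD('n).\<close>

definition mtrace :: "complex ^'n ^'n \<Rightarrow> complex" where
  "mtrace A = (\<Sum>i\<in>UNIV. A $ i $ i)"

definition hermitian :: "complex ^'n ^'n \<Rightarrow> bool" where
  "hermitian A \<longleftrightarrow> (\<forall>i j. A $ i $ j = cnj (A $ j $ i))"

definition Herm :: "(complex ^'n ^'n) set" where
  "Herm = {A. hermitian A}"

definition orth_proj :: "nat \<Rightarrow> complex ^'n ^'n \<Rightarrow> bool" where
  "orth_proj k P \<longleftrightarrow> hermitian P \<and> P ** P = P \<and> mtrace P = of_nat k"

text \<open>w_k(A) = max { |tr(AP)| : P rank-k orthogonal projection } (the max is attained).\<close>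
definition wk :: "nat \<Rightarrow> complex ^'n ^'n \<Rightarrow> real" where
  "wk k A = Sup {cmod (mtrace (A ** P)) | P. orth_proj k P}"

definition SH :: "nat \<Rightarrow> complex ^'n ^'n \<Rightarrow> (complex ^'n ^'n) set" where
  "SH k P = {B \<in> Herm. mtrace (B ** P) = complex_of_real (wk k B)}"

end

theory Submission
  imports Defs
begin

definition adj :: "complex^'n^'m \<Rightarrow> complex^'m^'n" where
  "adj A = (\<chi> i j. cnj (A $ j $ i))"

definition unitary :: "complex^'n^'n \<Rightarrow> bool" where
  "unitary U \<longleftrightarrow> U ** adj U = mat 1 \<and> adj U ** U = mat 1"

lemma adj_nth[simp]: "adj A $ i $ j = cnj (A $ j $ i)"
  by (simp add: adj_def)

lemma adj_adj[simp]: "adj (adj A) = A"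
  by (simp add: vec_eq_iff)

lemma adj_mult: "adj (A ** B) = adj B ** adj A"
  by (simp add: vec_eq_iff matrix_matrix_mult_def cnj_sum mult.commute)

lemma hermitian_adj: "hermitian A \<longleftrightarrow> adj A = A"
  unfolding hermitian_def vec_eq_iff adj_nth by (metis complex_cnj_cnj)

lemma mtrace_comm: "mtrace ((A::complex^'n^'n) ** B) = mtrace (B ** A)"
  unfolding mtrace_def matrix_matrix_mult_def
  by (simp add: mult.commute) (rule sum.swap)

lemma unitary_adj: "unitary U \<Longrightarrow> unitary (adj U)"
  by (simp add: unitary_def)

lemma unitary_cancel1: "unitary U \<Longrightarrow> X ** adj U ** U = X"
  by (metis matrix_mul_assoc matrix_mul_rid unitary_def)

lemma unitary_cancel2: "unitary U \<Longrightarrow> X ** U ** adj U = X"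
  by (metis matrix_mul_assoc matrix_mul_rid unitary_def)

lemma mtrace_conj: "unitary V \<Longrightarrow> mtrace (V ** A ** adj V) = mtrace A"
  by (metis matrix_mul_assoc mtrace_comm unitary_cancel1 matrix_mul_lid)

lemma herm_conj: "hermitian X \<Longrightarrow> hermitian (V ** X ** adj V)"
  by (simp add: hermitian_adj adj_mult matrix_mul_assoc)

lemma proj_conj:
  assumes "unitary V" "orth_proj k P"
  shows "orth_proj k (V ** P ** adj V)"
proof -
  have "V ** P ** adj V ** (V ** P ** adj V) = V ** (P ** P) ** adj V"
    using assms(1) by (simp add: matrix_mul_assoc unitary_cancel1)
  then show ?thesis using assms
    by (simp add: orth_proj_def herm_conj mtrace_conj)
qed

lemma wk_conj:
  assumes "unitary V"
  shows "wk k (V ** X ** adj V) = wk k X"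
proof -
  have "{cmod (mtrace (V ** X ** adj V ** P)) | P. orth_proj k P} =
        {cmod (mtrace (X ** Q)) | Q. orth_proj k Q}"
  proof (intro equalityI subsetI)
    fix a assume "a \<in> {cmod (mtrace (V ** X ** adj V ** P)) | P. orth_proj k P}"
    then obtain P where P: "orth_proj k P" "a = cmod (mtrace (V ** X ** adj V ** P))" by blast
    have "V ** X ** adj V ** P = V ** (X ** (adj V ** P ** V)) ** adj V"
      using assms by (simp add: matrix_mul_assoc unitary_cancel2)
    then have "a = cmod (mtrace (X ** (adj V ** P ** V)))"
      using P assms by (simp add: mtrace_conj)
    moreover have "orth_proj k (adj V ** P ** V)"
      using proj_conj[OF unitary_adj[OF assms] P(1)] by simp
    ultimately show "a \<in> {cmod (mtrace (X ** Q)) | Q. orth_proj k Q}" by blast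
  next
    fix a assume "a \<in> {cmod (mtrace (X ** Q)) | Q. orth_proj k Q}"
    then obtain Q where Q: "orth_proj k Q" "a = cmod (mtrace (X ** Q))" by blast
    have "V ** X ** adj V ** (V ** Q ** adj V) = V ** (X ** Q) ** adj V"
      using assms by (simp add: matrix_mul_assoc unitary_cancel1)
    then have "a = cmod (mtrace (V ** X ** adj V ** (V ** Q ** adj V)))"
      using Q assms by (simp add: mtrace_conj)
    moreover have "orth_proj k (V ** Q ** adj V)" using proj_conj[OF assms Q(1)] .
    ultimately show "a \<in> {cmod (mtrace (V ** X ** adj V ** P)) | P. orth_proj k P}" by blast
  qed
  then show ?thesis by (simp add: wk_def)
qed

lemma SH_conj_sub:
  assumes "unitary V" "B \<in> SH k P"
  shows "V ** B ** adj V \<in> SH k (V ** P ** adj V)"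
proof -
  have "V ** B ** adj V ** (V ** P ** adj V) = V ** (B ** P) ** adj V"
    using assms by (simp add: matrix_mul_assoc unitary_cancel1)
  then show ?thesis using assms
    by (simp add: SH_def Herm_def herm_conj mtrace_conj wk_conj)
qed

lemma conj_inv1: "unitary V \<Longrightarrow> adj V ** (V ** X ** adj V) ** V = X"
proof -
  assume u: "unitary V"
  then have "adj V ** V = mat 1" by (simp add: unitary_def)
  then show ?thesis using u by (simp add: matrix_mul_assoc unitary_cancel1)
qed

lemma conj_inv2: "unitary V \<Longrightarrow> V ** (adj V ** X ** V) ** adj V = X"
proof -
  assume u: "unitary V"
  then have "V ** adj V = mat 1" by (simp add: unitary_def)
  then show ?thesis using u by (simp add: matrix_mul_assoc unitary_cancel2)
qed

lemma SH_conj: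
  assumes "unitary V"
  shows "SH k (V ** P ** adj V) = (\<lambda>B. V ** B ** adj V) ` SH k P"
proof (intro equalityI subsetI)
  fix C assume C: "C \<in> SH k (V ** P ** adj V)"
  have "adj V ** C ** adj (adj V) \<in> SH k (adj V ** (V ** P ** adj V) ** adj (adj V))"
    by (rule SH_conj_sub[OF unitary_adj[OF assms] C])
  then have "adj V ** C ** V \<in> SH k P" using conj_inv1[OF assms] by simp
  moreover have "C = V ** (adj V ** C ** V) ** adj V"
    using conj_inv2[OF assms] by simp
  ultimately show "C \<in> (\<lambda>B. V ** B ** adj V) ` SH k P" by blast
qed (use SH_conj_sub[OF assms] in blast)

lemma matrix_add_rdistrib': "((B + C) ** A) = (B ** A) + (C ** A)"
  by (vector matrix_matrix_mult_def sum.distrib[symmetric] field_simps)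

lemma conj_linear: "linear (\<lambda>B::complex^'n^'n. V ** B ** adj V)"
  by (rule linearI)
     (simp_all add: matrix_add_ldistrib matrix_add_rdistrib' matrix_scalar_ac scalar_matrix_assoc)

lemma dim_SH_conj:
  fixes V :: "complex^'n^'n"
  assumes "unitary V"
  shows "dim (span (SH k (V ** P ** adj V))) = dim (span (SH k P))"
proof -
  have inj: "inj (\<lambda>B::complex^'n^'n. V ** B ** adj V)"
  proof (rule injI)
    fix x y assume "V ** x ** adj V = V ** y ** adj V"
    then have "adj V ** (V ** x ** adj V) ** V = adj V ** (V ** y ** adj V) ** V" by simp
    then show "x = y" using conj_inv1[OF assms] by simp
  qed
  have "dim ((\<lambda>B. V ** B ** adj V) ` SH k P) = dim (SH k P)"
    by (rule dim_image_eq[OF conj_linear]) (use inj in \<open>auto intro: inj_on_subset\<close>)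
  then show ?thesis
    unfolding dim_span SH_conj[OF assms] .
qed


definition cinner :: "complex^'n \<Rightarrow> complex^'n \<Rightarrow> complex" where
  "cinner x y = (\<Sum>i\<in>UNIV. cnj (x$i) * y$i)"

lemma cinner_cnj: "cnj (cinner x y) = cinner y x"
  by (simp add: cinner_def mult.commute)

lemma cinner_zero_left[simp]: "cinner 0 y = 0"
  by (simp add: cinner_def)

lemma cinner_zero_right[simp]: "cinner x 0 = 0"
  by (simp add: cinner_def)

lemma cinner_diff_right: "cinner x (y - z) = cinner x y - cinner x z"
  by (simp add: cinner_def right_diff_distrib sum_subtractf)

lemma cinner_sum_right: "cinner x (\<Sum>s\<in>S. f s) = (\<Sum>s\<in>S. cinner x (f s))"
  unfolding cinner_def by (simp add: sum_distrib_left) (rule sum.swap)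

lemma cinner_smult_right: "cinner x (c *s y) = c * cinner x y"
  by (simp add: cinner_def sum_distrib_left mult_ac)

lemma comp_scaleR: "(r *\<^sub>R y) $ i = of_real r * (y $ i :: complex)"
  by (subst vector_scaleR_component) (rule scaleR_conv_of_real)

lemma cinner_scaleR_right: "cinner x (r *\<^sub>R y) = of_real r * cinner x y"
  unfolding cinner_def comp_scaleR by (simp add: sum_distrib_left mult_ac)

lemma cinner_scaleR_left: "cinner (r *\<^sub>R x) y = of_real r * cinner x y"
  unfolding cinner_def comp_scaleR by (simp add: sum_distrib_left mult_ac)

lemma cinner_matrix: "cinner x (A *v y) = cinner (adj A *v x) y"
  unfolding cinner_def matrix_vector_mult_def
  by (simp add: sum_distrib_left sum_distrib_right mult_ac) (rule sum.swap)

lemma cinner_self: "cinner z z = of_real ((norm z)^2)"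
proof -
  have "(norm z)^2 = (\<Sum>i\<in>UNIV. (norm (z$i))^2)"
    unfolding norm_vec_def L2_set_def by (simp add: sum_nonneg)
  then have "of_real ((norm z)^2) = (\<Sum>i\<in>UNIV. of_real ((norm (z$i))^2) :: complex)"
    by simp
  also have "\<dots> = cinner z z"
    unfolding cinner_def complex_norm_square by (simp add: mult.commute)
  finally show ?thesis by simp
qed

lemma mv_scaleR: "(A::complex^'n^'m) *v (r *\<^sub>R x) = r *\<^sub>R (A *v x)"
  by (simp add: vec_eq_iff matrix_vector_mult_def scaleR_sum_right)

definition ONE :: "complex^'n^'n \<Rightarrow> (complex^'n) set \<Rightarrow> bool" where
  "ONE P S \<longleftrightarrow> finite S \<and> (\<forall>s\<in>S. cinner s s = 1) \<and>
     (\<forall>s\<in>S. \<forall>t\<in>S. s \<noteq> t \<longrightarrow> cinner s t = 0) \<and> (\<forall>s\<in>S. P *v s = s \<or> P *v s = 0)"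

lemma ONE_card:
  assumes O: "ONE P (S :: (complex^'n) set)"
  shows "card S \<le> DIM(complex^'n)"
proof -
  have "independent S"
  proof (rule real_vector.independent_if_scalars_zero)
    show "finite S" using O by (simp add: ONE_def)
  next
    fix f x assume sum: "(\<Sum>x\<in>S. f x *\<^sub>R x) = 0" and x: "x \<in> S"
    have "cinner x (\<Sum>y\<in>S. f y *\<^sub>R y) = (\<Sum>y\<in>S. of_real (f y) * cinner x y)"
      by (simp add: cinner_sum_right cinner_scaleR_right)
    also have "\<dots> = (\<Sum>y\<in>S. if y = x then of_real (f y) else 0)"
      by (rule sum.cong) (use O x in \<open>auto simp: ONE_def\<close>)
    also have "\<dots> = of_real (f x)" using O x by (simp add: ONE_def)
    finally show "f x = 0" using sum by simp
  qed
  then show ?thesis using independent_bound by blast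
qed

lemma ONE_max_expand:
  assumes herm: "hermitian P" and idem: "P ** P = P" and O: "ONE P S"
    and max: "\<forall>S'. ONE P S' \<longrightarrow> card S' \<le> card S"
  shows "x = (\<Sum>s\<in>S. cinner s x *s s)"
proof (rule ccontr)
  define y where "y = x - (\<Sum>s\<in>S. cinner s x *s s)"
  assume "x \<noteq> (\<Sum>s\<in>S. cinner s x *s s)"
  then have y0: "y \<noteq> 0" by (simp add: y_def)
  have fin: "finite S" using O by (simp add: ONE_def)
  have orth: "cinner t y = 0" if t: "t \<in> S" for t
  proof -
    have "cinner t y = cinner t x - (\<Sum>s\<in>S. cinner s x * cinner t s)"
      by (simp add: y_def cinner_diff_right cinner_sum_right cinner_smult_right)
    also have "(\<Sum>s\<in>S. cinner s x * cinner t s) = (\<Sum>s\<in>S. if s = t then cinner t x else 0)"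
      by (rule sum.cong) (use O t in \<open>auto simp: ONE_def\<close>)
    also have "\<dots> = cinner t x" using fin t by simp
    finally show ?thesis by simp
  qed
  have Pt: "cinner t (P *v z) = 0" if t: "t \<in> S" and "cinner t z = 0" for t z
  proof -
    have "cinner t (P *v z) = cinner (P *v t) z"
      using herm by (simp add: cinner_matrix hermitian_adj)
    then show ?thesis using O t that(2) by (auto simp: ONE_def)
  qed
  define z1 where "z1 = P *v y"
  define z2 where "z2 = y - P *v y"
  have z1e: "P *v z1 = z1" unfolding z1_def by (simp add: matrix_vector_mul_assoc idem)
  have z2e: "P *v z2 = 0" unfolding z2_def
    by (simp add: matrix_vector_mult_diff_distrib matrix_vector_mul_assoc idem)
  have o1: "\<forall>t\<in>S. cinner t z1 = 0" using Pt orth unfolding z1_def by blast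
  have o2: "\<forall>t\<in>S. cinner t z2 = 0" using o1 orth unfolding z2_def
    by (simp add: cinner_diff_right z1_def)
  obtain z where z0: "z \<noteq> 0" and oz: "\<forall>t\<in>S. cinner t z = 0" and ez: "P *v z = z \<or> P *v z = 0"
  proof (cases "z1 = 0")
    case True
    then have "z2 = y" by (simp add: z2_def z1_def)
    then show ?thesis using that[of z2] y0 o2 z2e by auto
  next
    case False
    then show ?thesis using that[of z1] o1 z1e by auto
  qed
  define w where "w = (1 / norm z) *\<^sub>R z"
  have nz: "norm z \<noteq> 0" using z0 by simp
  have ww: "cinner w w = 1"
    unfolding w_def cinner_scaleR_left cinner_scaleR_right cinner_self
    using nz by (simp add: power2_eq_square field_simps)
  have ow: "\<forall>t\<in>S. cinner t w = 0" using oz by (simp add: w_def cinner_scaleR_right)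
  have ow': "\<forall>t\<in>S. cinner w t = 0" using ow by (metis cinner_cnj complex_cnj_zero)
  have ew: "P *v w = w \<or> P *v w = 0" using ez by (auto simp: w_def mv_scaleR)
  have wS: "w \<notin> S" using ww ow by auto
  have "ONE P (insert w S)"
    using O ww ow ow' ew fin unfolding ONE_def by auto
  then have "card (insert w S) \<le> card S" using max by blast
  then show False using wS fin by simp
qed

lemma cinner_axis: "cinner s (axis j 1) = cnj (s $ j)"
proof -
  have "cinner s (axis j 1) = (\<Sum>i\<in>UNIV. if i = j then cnj (s$i) else 0)"
    unfolding cinner_def axis_def by (rule sum.cong) auto
  then show ?thesis by simp
qed


lemma spectral:
  fixes P :: "complex^'n^'n" and K :: "'n set"
  assumes pr: "orth_proj k P" and cK: "card K = k"
  shows "\<exists>U. unitary U \<and> P = U ** (\<chi> i j. if i = j \<and> i \<in> K then 1 else 0) ** adj U"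
proof -
  have herm: "hermitian P" and idem: "P ** P = P" and tr: "mtrace P = of_nat k"
    using pr by (auto simp: orth_proj_def)
  have e0: "\<exists>S. ONE P S \<and> card S = 0" by (rule exI[of _ "{}"]) (simp add: ONE_def)
  have bound: "\<forall>y. (\<exists>S. ONE P S \<and> card S = y) \<longrightarrow> y \<le> DIM(complex^'n)"
    using ONE_card by blast
  obtain m where m: "\<exists>S. ONE P S \<and> card S = m"
      and mm: "\<forall>y. (\<exists>S. ONE P S \<and> card S = y) \<longrightarrow> y \<le> m"
    using Nat.ex_has_greatest_nat[OF e0 bound] by blast
  then obtain S where S: "ONE P S" and max: "\<forall>S'. ONE P S' \<longrightarrow> card S' \<le> card S"
    by blast
  have fin: "finite S" using S by (simp add: ONE_def)
  have exp: "\<And>x. x = (\<Sum>s\<in>S. cinner s x *s s)"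
    using ONE_max_expand[OF herm idem S max] by blast
  have E1: "(\<Sum>s\<in>S. s$i * cnj (s$j)) = (if i = j then 1 else 0)" for i j
  proof -
    have "(axis j 1 :: complex^'n) $ i = (\<Sum>s\<in>S. cinner s (axis j 1) *s s) $ i"
      using exp[of "axis j 1"] by simp
    also have "\<dots> = (\<Sum>s\<in>S. cnj (s$j) * s$i)"
      by (simp only: sum_component vector_smult_component cinner_axis)
    finally show ?thesis by (simp add: axis_def mult.commute)
  qed
  define R where "R = {s\<in>S. P *v s = s}"
  have RS: "R \<subseteq> S" by (auto simp: R_def)
  have finR: "finite R" using fin RS finite_subset by blast
  have E2: "P$i$j = (\<Sum>s\<in>R. s$i * cnj (s$j))" for i j
  proof -
    have "P$i$j = (\<Sum>m\<in>UNIV. if m = j then P$i$m else 0)" by simp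
    also have "\<dots> = (\<Sum>m\<in>UNIV. P$i$m * (if m = j then 1 else 0))"
      by (rule sum.cong) auto
    also have "\<dots> = (\<Sum>m\<in>UNIV. P$i$m * (\<Sum>s\<in>S. s$m * cnj (s$j)))"
      by (simp add: E1)
    also have "\<dots> = (\<Sum>m\<in>UNIV. \<Sum>s\<in>S. P$i$m * s$m * cnj (s$j))"
      by (simp add: sum_distrib_left mult.assoc)
    also have "\<dots> = (\<Sum>s\<in>S. \<Sum>m\<in>UNIV. P$i$m * s$m * cnj (s$j))"
      by (rule sum.swap)
    also have "\<dots> = (\<Sum>s\<in>S. (P *v s)$i * cnj (s$j))"
      by (simp add: matrix_vector_mult_def sum_distrib_right)
    also have "\<dots> = (\<Sum>s\<in>S. if P *v s = s then s$i * cnj (s$j) else 0)"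
      by (rule sum.cong) (use S in \<open>auto simp: ONE_def\<close>)
    also have "\<dots> = (\<Sum>s\<in>R. s$i * cnj (s$j))"
      unfolding R_def using fin by (simp add: sum.inter_filter)
    finally show ?thesis .
  qed
  have selfn: "(\<Sum>i\<in>UNIV. s$i * cnj (s$i)) = 1" if "s \<in> S" for s
  proof -
    have "(\<Sum>i\<in>UNIV. s$i * cnj (s$i)) = cinner s s"
      by (simp add: cinner_def mult.commute)
    then show ?thesis using S that by (simp add: ONE_def)
  qed
  have cardS: "card S = CARD('n)"
  proof -
    have "(of_nat CARD('n) :: complex) = (\<Sum>i\<in>UNIV. \<Sum>s\<in>S. s$i * cnj (s$i))"
      by (simp add: E1)
    also have "\<dots> = (\<Sum>s\<in>S. \<Sum>i\<in>UNIV. s$i * cnj (s$i))" by (rule sum.swap)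
    also have "\<dots> = (\<Sum>s\<in>S. 1)" by (rule sum.cong) (auto simp: selfn)
    finally show ?thesis by simp
  qed
  have cardR: "card R = k"
  proof -
    have "(of_nat k :: complex) = (\<Sum>i\<in>UNIV. \<Sum>s\<in>R. s$i * cnj (s$i))"
      using tr by (simp add: mtrace_def E2)
    also have "\<dots> = (\<Sum>s\<in>R. \<Sum>i\<in>UNIV. s$i * cnj (s$i))" by (rule sum.swap)
    also have "\<dots> = (\<Sum>s\<in>R. 1)" by (rule sum.cong) (use RS in \<open>auto simp: selfn\<close>)
    finally show ?thesis by simp
  qed
  obtain f where f: "bij_betw f K R"
    using finite_same_card_bij[of K R] finR cK cardR by auto
  have c1: "card (UNIV - K) = CARD('n) - k" using cK by (simp add: card_Diff_subset)
  have c2: "card (S - R) = CARD('n) - k" using cardS cardR RS finR by (simp add: card_Diff_subset)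
  obtain g where g: "bij_betw g (UNIV - K) (S - R)"
    using finite_same_card_bij[of "UNIV - K" "S - R"] fin c1 c2 by auto
  define \<sigma> where "\<sigma> j = (if j \<in> K then f j else g j)" for j
  have s1: "bij_betw \<sigma> K R" using f by (rule bij_betw_cong[THEN iffD1, rotated]) (simp add: \<sigma>_def)
  have s2: "bij_betw \<sigma> (UNIV - K) (S - R)"
    using g by (rule bij_betw_cong[THEN iffD1, rotated]) (simp add: \<sigma>_def)
  have "bij_betw \<sigma> (K \<union> (UNIV - K)) (R \<union> (S - R))"
    by (rule bij_betw_combine[OF s1 s2]) auto
  moreover have "K \<union> (UNIV - K) = UNIV" "R \<union> (S - R) = S" using RS by auto
  ultimately have s: "bij_betw \<sigma> UNIV S" by simp
  define U :: "complex^'n^'n" where "U = (\<chi> i j. \<sigma> j $ i)"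
  have U1: "U ** adj U = mat 1"
  proof -
    have "(\<Sum>j\<in>UNIV. \<sigma> j $ i * cnj (\<sigma> j $ l)) = (if i = l then 1 else 0)" for i l
      using sum.reindex_bij_betw[OF s, of "\<lambda>s. s$i * cnj (s$l)"] E1 by simp
    then show ?thesis by (simp add: vec_eq_iff matrix_matrix_mult_def U_def mat_def)
  qed
  have U2: "adj U ** U = mat 1"
  proof -
    have inj: "inj \<sigma>" using s by (simp add: bij_betw_def)
    have sS: "\<sigma> j \<in> S" for j using s by (auto simp: bij_betw_def)
    have "(\<Sum>i\<in>UNIV. cnj (\<sigma> j $ i) * \<sigma> l $ i) = (if j = l then 1 else 0)" for j l
    proof -
      have "(\<Sum>i\<in>UNIV. cnj (\<sigma> j $ i) * \<sigma> l $ i) = cinner (\<sigma> j) (\<sigma> l)"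
        by (simp add: cinner_def)
      then show ?thesis using S sS[of j] sS[of l] inj[THEN injD, of j l]
        by (auto simp: ONE_def)
    qed
    then show ?thesis by (simp add: vec_eq_iff matrix_matrix_mult_def U_def mat_def)
  qed
  have U3: "U ** (\<chi> i j. if i = j \<and> i \<in> K then 1 else 0) ** adj U = P"
  proof -
    have UD: "U ** (\<chi> i j. if i = j \<and> i \<in> K then 1 else 0) = (\<chi> i j. if j \<in> K then \<sigma> j $ i else 0)"
    proof -
      have "(\<Sum>m\<in>UNIV. \<sigma> m $ i * (if m = j \<and> m \<in> K then 1 else 0)) = (if j \<in> K then \<sigma> j $ i else 0)"
        for i j
      proof -
        have "(\<Sum>m\<in>UNIV. \<sigma> m $ i * (if m = j \<and> m \<in> K then 1 else 0)) =
              (\<Sum>m\<in>UNIV. if m = j then (if j \<in> K then \<sigma> j $ i else 0) else 0)"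
          by (rule sum.cong) auto
        then show ?thesis by simp
      qed
      then show ?thesis by (simp add: vec_eq_iff matrix_matrix_mult_def U_def)
    qed
    have "(\<Sum>j\<in>UNIV. (if j \<in> K then \<sigma> j $ i else 0) * cnj (\<sigma> j $ l)) = P$i$l" for i l
    proof -
      have "(\<Sum>j\<in>UNIV. (if j \<in> K then \<sigma> j $ i else 0) * cnj (\<sigma> j $ l)) =
            (\<Sum>j\<in>UNIV. if j \<in> K then \<sigma> j $ i * cnj (\<sigma> j $ l) else 0)"
        by (rule sum.cong) auto
      also have "\<dots> = (\<Sum>j\<in>K. \<sigma> j $ i * cnj (\<sigma> j $ l))"
        by (simp add: sum.If_cases)
      also have "\<dots> = (\<Sum>s\<in>R. s $ i * cnj (s $ l))"
        by (rule sum.reindex_bij_betw[OF s1])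
      finally show ?thesis using E2 by simp
    qed
    then show ?thesis unfolding UD by (simp add: vec_eq_iff matrix_matrix_mult_def U_def)
  qed
  show ?thesis using U1 U2 U3 by (auto simp: unitary_def)
qed


lemma proj_equiv:
  fixes P Q :: "complex^'n^'n"
  assumes "orth_proj k P" "orth_proj k Q" "k \<le> CARD('n)"
  shows "\<exists>V. unitary V \<and> Q = V ** P ** adj V"
proof -
  obtain K :: "'n set" where cK: "card K = k"
    using obtain_subset_with_card_n[of k "UNIV :: 'n set"] assms(3) by auto
  define D :: "complex^'n^'n" where "D = (\<chi> i j. if i = j \<and> i \<in> K then 1 else 0)"
  obtain U1 where U1: "unitary U1" "P = U1 ** D ** adj U1"
    using spectral[OF assms(1) cK] unfolding D_def by blast
  obtain U2 where U2: "unitary U2" "Q = U2 ** D ** adj U2"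
    using spectral[OF assms(2) cK] unfolding D_def by blast
  define V where "V = U2 ** adj U1"
  have a1: "adj U1 ** U1 = mat 1" "U1 ** adj U1 = mat 1" using U1 by (auto simp: unitary_def)
  have a2: "adj U2 ** U2 = mat 1" "U2 ** adj U2 = mat 1" using U2 by (auto simp: unitary_def)
  have "V ** adj V = mat 1"
    unfolding V_def adj_mult adj_adj using U1 a2
    by (simp add: matrix_mul_assoc unitary_cancel1)
  moreover have "adj V ** V = mat 1"
    unfolding V_def adj_mult adj_adj using U2 a1
    by (simp add: matrix_mul_assoc unitary_cancel1)
  moreover have "V ** P ** adj V = Q"
    unfolding V_def adj_mult adj_adj U1(2) U2(2) using U1
    by (simp add: matrix_mul_assoc unitary_cancel1)
  ultimately show ?thesis unfolding unitary_def by blast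
qed

lemma dim_SH_eq:
  fixes P Q :: "complex^'n^'n"
  assumes "orth_proj k P" "orth_proj k Q" "k \<le> CARD('n)"
  shows "dim (span (SH k Q)) = dim (span (SH k P))"
proof -
  obtain V where V: "unitary V" "Q = V ** P ** adj V" using proj_equiv[OF assms] by blast
  show ?thesis using dim_SH_conj[OF V(1), of k P] V(2) by simp
qed

lemma adj_add: "adj (A + B) = adj A + adj B"
  by (simp add: vec_eq_iff)

lemma adj_scaleR: "adj (r *\<^sub>R A) = r *\<^sub>R adj A"
  by (simp add: vec_eq_iff complex_cnj_scaleR)

lemma adj_zero: "adj 0 = 0"
  by (simp add: vec_eq_iff)

lemma subspace_Herm: "subspace (Herm :: (complex^'n^'n) set)"
proof -
  have "(0::complex^'n^'n) \<in> Herm" by (simp add: Herm_def hermitian_adj adj_zero)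
  moreover have "\<forall>x\<in>(Herm::(complex^'n^'n) set). \<forall>y\<in>Herm. x + y \<in> Herm"
    by (simp add: Herm_def hermitian_adj adj_add)
  moreover have "\<forall>c. \<forall>x\<in>(Herm::(complex^'n^'n) set). c *\<^sub>R x \<in> Herm"
    by (simp add: Herm_def hermitian_adj adj_scaleR)
  ultimately show ?thesis unfolding subspace_def by blast
qed

theorem mainTheorem11:
  fixes T :: "complex ^'n ^'n \<Rightarrow> complex ^'n ^'n"
    and k :: nat and P1 P2 :: "complex ^'n ^'n" and \<theta>1 \<theta>2 :: real
  assumes "1 \<le> k" and "k < CARD('n)"
    and "\<forall>A\<in>Herm. \<forall>B\<in>Herm. T (A + B) = T A + T B"
    and "\<forall>r::real. \<forall>A\<in>Herm. T (r *\<^sub>R A) = r *\<^sub>R T A"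
    and "bij_betw T Herm Herm"
    and "orth_proj k P1" and "orth_proj k P2"
    and "span (SH k P1) \<noteq> span (SH k P2)"
    and "\<theta>1 \<in> {-1, 1}" and "\<theta>2 \<in> {-1, 1}"
  shows "\<not> (\<exists>Q \<theta>3. orth_proj k Q \<and> \<theta>3 \<in> {-1, 1::real} \<and>
            T ` ((\<lambda>B. \<theta>1 *\<^sub>R B) ` SH k P1) \<union> T ` ((\<lambda>B. \<theta>2 *\<^sub>R B) ` SH k P2)
              \<subseteq> (\<lambda>B. \<theta>3 *\<^sub>R B) ` SH k Q)"
proof
  assume "\<exists>Q \<theta>3. orth_proj k Q \<and> \<theta>3 \<in> {-1, 1::real} \<and>
            T ` ((\<lambda>B. \<theta>1 *\<^sub>R B) ` SH k P1) \<union> T ` ((\<lambda>B. \<theta>2 *\<^sub>R B) ` SH k P2)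
              \<subseteq> (\<lambda>B. \<theta>3 *\<^sub>R B) ` SH k Q"
  then obtain Q \<theta>3 where Q: "orth_proj k Q" and th3: "\<theta>3 \<in> {-1, 1::real}"
    and incl: "T ` ((\<lambda>B. \<theta>1 *\<^sub>R B) ` SH k P1) \<union> T ` ((\<lambda>B. \<theta>2 *\<^sub>R B) ` SH k P2)
              \<subseteq> (\<lambda>B. \<theta>3 *\<^sub>R B) ` SH k Q" by blast
  have kn: "k \<le> CARD('n)" using assms(2) by simp
  define W where "W = span (SH k Q)"
  define h :: "complex^'n^'n \<Rightarrow> complex^'n^'n" where "h X = (1/2) *\<^sub>R (X + adj X)" for X
  define L where "L X = T (h X)" for X
  have hH: "h X \<in> Herm" for X
    unfolding Herm_def h_def by (simp add: hermitian_adj adj_add adj_scaleR add.commute)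
  have hid: "X \<in> Herm \<Longrightarrow> h X = X" for X
    unfolding Herm_def h_def by (simp add: hermitian_adj scaleR_2[symmetric])
  have hadd: "h (X + Y) = h X + h Y" for X Y
    unfolding h_def adj_add by (simp add: algebra_simps)
  have hsc: "h (r *\<^sub>R X) = r *\<^sub>R h X" for r X
    unfolding h_def adj_scaleR by (simp add: algebra_simps)
  have linL: "linear L"
    by (rule linearI) (simp_all add: L_def hadd hsc hH assms(3,4))
  have LT: "X \<in> Herm \<Longrightarrow> L X = T X" for X by (simp add: L_def hid)
  have SHH: "SH k P \<subseteq> Herm" for P :: "complex^'n^'n" by (auto simp: SH_def)
  have spH: "span (SH k P1 \<union> SH k P2) \<subseteq> Herm"
    using SHH by (intro span_minimal subspace_Herm) blast
  have injT: "inj_on T Herm" using assms(5) by (simp add: bij_betw_def)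
  have injL: "inj_on L (span (SH k P1 \<union> SH k P2))"
  proof (rule inj_onI)
    fix x y assume x: "x \<in> span (SH k P1 \<union> SH k P2)" and y: "y \<in> span (SH k P1 \<union> SH k P2)"
      and e: "L x = L y"
    have xH: "x \<in> Herm" and yH: "y \<in> Herm" using x y spH by blast+
    have "T x = T y" using e LT[OF xH] LT[OF yH] by simp
    then show "x = y" using inj_onD[OF injT _ xH yH] by blast
  qed
  have inW: "T B \<in> W" if B: "B \<in> SH k P" and th: "\<theta> \<in> {-1, 1::real}"
    and sub: "T ` ((\<lambda>B. \<theta> *\<^sub>R B) ` SH k P) \<subseteq> (\<lambda>B. \<theta>3 *\<^sub>R B) ` SH k Q" for B P \<theta>
  proof -
    have "T (\<theta> *\<^sub>R B) \<in> (\<lambda>B. \<theta>3 *\<^sub>R B) ` SH k Q" using sub B by blast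
    then obtain C where C: "C \<in> SH k Q" "T (\<theta> *\<^sub>R B) = \<theta>3 *\<^sub>R C" by blast
    have BH: "B \<in> Herm" using B SHH by blast
    have tt: "\<theta> * \<theta> = 1" using th by auto
    have "T (\<theta> *\<^sub>R B) = \<theta> *\<^sub>R T B" using BH assms(4) by blast
    then have "\<theta> *\<^sub>R T (\<theta> *\<^sub>R B) = (\<theta> * \<theta>) *\<^sub>R T B" by simp
    then have "T B = \<theta> *\<^sub>R T (\<theta> *\<^sub>R B)" using tt by simp
    also have "\<dots> = (\<theta> * \<theta>3) *\<^sub>R C" using C by simp
    finally show ?thesis unfolding W_def using C by (simp add: span_mul span_base)
  qed
  have LW: "L ` (SH k P1 \<union> SH k P2) \<subseteq> W"
  proof
    fix Y assume "Y \<in> L ` (SH k P1 \<union> SH k P2)"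
    then obtain B where B: "B \<in> SH k P1 \<union> SH k P2" "Y = L B" by blast
    have "Y = T B" using B SHH LT by blast
    have s1: "T ` ((\<lambda>B. \<theta>1 *\<^sub>R B) ` SH k P1) \<subseteq> (\<lambda>B. \<theta>3 *\<^sub>R B) ` SH k Q"
      using incl by blast
    have s2: "T ` ((\<lambda>B. \<theta>2 *\<^sub>R B) ` SH k P2) \<subseteq> (\<lambda>B. \<theta>3 *\<^sub>R B) ` SH k Q"
      using incl by blast
    from B(1) show "Y \<in> W"
    proof
      assume "B \<in> SH k P1" then show ?thesis using inW[OF _ assms(9) s1] \<open>Y = T B\<close> by blast
    next
      assume "B \<in> SH k P2" then show ?thesis using inW[OF _ assms(10) s2] \<open>Y = T B\<close> by blast
    qed
  qed
  have "dim (SH k P1 \<union> SH k P2) = dim (L ` (SH k P1 \<union> SH k P2))"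
    by (rule dim_image_eq[OF linL injL, symmetric])
  also have "\<dots> \<le> dim W" using LW by (rule dim_subset)
  also have "dim W = dim (SH k P1)"
    unfolding W_def using dim_SH_eq[OF assms(6) Q kn] by simp
  finally have d1: "dim (SH k P1 \<union> SH k P2) \<le> dim (SH k P1)" .
  have "dim W = dim (SH k P2)"
    unfolding W_def using dim_SH_eq[OF assms(7) Q kn] by simp
  then have d2: "dim (SH k P1 \<union> SH k P2) \<le> dim (SH k P2)"
    using \<open>dim (SH k P1 \<union> SH k P2) = dim (L ` (SH k P1 \<union> SH k P2))\<close> dim_subset[OF LW] by simp
  have "span (SH k P1) = span (SH k P1 \<union> SH k P2)" by (rule dim_eq_span) (use d1 in auto)
  moreover have "span (SH k P2) = span (SH k P1 \<union> SH k P2)" by (rule dim_eq_span) (use d2 in auto)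
  ultimately show False using assms(8) by simp
qed

end
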